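(* (1) In $\mathcal{N}ec$, every morphism $\varphi$ from $(n_1,\dots,n_k)$ to $(m)$ decomposes uniquely as $\varphi=\varphi_1*\dots*\varphi_k$, where each $\varphi_i:\square^{n_i}\to\square^m$ is a morphism of cubical sets (i.e. of $\square$) and $\varphi_1(\alpha)=\alpha$, $\varphi_i(\omega)=\varphi_{i+1}(\alpha)$ for $1\le i\le k-1$, and $\varphi_k(\omega)=\omega$. In particular $m\le n_1+\dots+n_k$. (2) Given a morphism $f:(n_1,\dots,n_k)\to(m_1,\dots,m_l)$ in $\mathcal{N}ec$, there exist a decomposition $(A_1,\dots,A_l)$ of the sequence $(n_1,\dots,n_k)$ into $l$ blocks and morphisms $f_j:A_j\to(m_j)$ in $\mathcal{N}ec$ such that $f=f_1\vee\dots\vee f_l$. This decomposition is unique if, for every $1\le i\le k$, the restriction of $f$ to the $i$-th bead $\square^{n_i}$ is not constant.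
   Context: Cubical sets: presheaves on the category $\square$ with objects $[1]^n$ and morphisms generated by faces $\partial_{i,\epsilon}$ (insert $\epsilon$ at coordinate $i$), degeneracies (delete a coordinate) and negative connections ($\gamma_{i,0}$ replaces $(x_i,x_{i+1})$ by $\max(x_i,x_{i+1})$); $\square^n$ is representable, with vertices the subsets of $\{1,\dots,n\}$, $\alpha=\emptyset$, $\omega=\{1,\dots,n\}$. Double-pointed cubical sets $X_{a,b}$ are cubical sets with two chosen vertices; morphisms preserve both. For $X_{a,b},Y_{u,v}$, $X\vee Y$ is the pushout identifying $b$ with $u$, pointed by $(a,v)$; for double-pointed maps $f,g$, $f\vee g$ is the induced map on wedges. For a cubical set $X$ with vertices $u,v,w$ and maps $f:S_{a,b}\to X_{u,v}$, $g:T_{a',b'}\to X_{v,w}$, $f*g:(S\vee T)_{a,b'}\to X_{u,w}$ is the induced map from the pushout. A necklace, identified with the sequence $(n_1,\dots,n_k)$ of positive integers, is $\square^{n_1}\vee\dots\vee\square^{n_k}$ pointed by the $\alpha$ of the first and the $\omega$ of the last cube; its $i$-th bead is the canonical map $\square^{n_i}\to T$. $\mathcal{N}ec$ is the full subcategory of double-pointed cubical sets on necklaces. A decomposition of a nonempty sequence $(n_1,\dots,n_k)$ into $l$ blocks is a tuple $(A_1,\dots,A_l)$ of nonempty sequences whose concatenation is $(n_1,\dots,n_k)$; each $A_j$ is regarded as a necklace. *)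

theory Defs
  imports "HOL-Library.FuncSet"
begin

text \<open>A vertex of [1]^n is a boolean list of length n (coordinate i true iff i is in the
subset). A morphism [1]^n -> [1]^m of the cube category is represented by its (extensional)
action on vertices; the category is a subcategory of posets, so this is faithful.\<close>

type_synonym cube = "bool list \<Rightarrow> bool list"

definition verts :: "nat \<Rightarrow> bool list set" where
  "verts n = {xs. length xs = n}"

text \<open>Generators, 1-indexed coordinates as in the paper.\<close>
definition ins_coord :: "nat \<Rightarrow> bool \<Rightarrow> bool list \<Rightarrow> bool list" where
  "ins_coord i e xs = take (i - 1) xs @ e # drop (i - 1) xs"

definition del_coord :: "nat \<Rightarrow> bool list \<Rightarrow> bool list" where
  "del_coord i xs = take (i - 1) xs @ drop i xs"

definition conn_coord :: "nat \<Rightarrow> bool list \<Rightarrow> bool list" where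
  "conn_coord i xs = take (i - 1) xs @ (xs ! (i - 1) \<or> xs ! i) # drop (i + 1) xs"

inductive cmor :: "nat \<Rightarrow> nat \<Rightarrow> cube \<Rightarrow> bool" where
  cmor_id: "cmor n n (restrict id (verts n))"
| cmor_face: "1 \<le> i \<Longrightarrow> i \<le> Suc n \<Longrightarrow> cmor n (Suc n) (restrict (ins_coord i e) (verts n))"
| cmor_degen: "1 \<le> i \<Longrightarrow> i \<le> Suc n \<Longrightarrow> cmor (Suc n) n (restrict (del_coord i) (verts (Suc n)))"
| cmor_conn: "1 \<le> i \<Longrightarrow> i \<le> n \<Longrightarrow> cmor (Suc n) n (restrict (conn_coord i) (verts (Suc n)))"
| cmor_comp: "cmor n m f \<Longrightarrow> cmor m p g \<Longrightarrow> cmor n p (compose (verts n) g f)"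

definition alpha_v :: "nat \<Rightarrow> bool list" where "alpha_v n = replicate n False"
definition omega_v :: "nat \<Rightarrow> bool list" where "omega_v n = replicate n True"

definition constk :: "nat \<Rightarrow> bool list \<Rightarrow> cube" where
  "constk k v = restrict (\<lambda>_. v) (verts k)"

text \<open>A cubical set: cells in each dimension, and for a cube morphism psi : [1]^k' -> [1]^k
the action  act k' k psi : cells k -> cells k'.\<close>
record 'a cset =
  cells :: "nat \<Rightarrow> 'a set"
  act :: "nat \<Rightarrow> nat \<Rightarrow> cube \<Rightarrow> 'a \<Rightarrow> 'a"

definition cs_hom :: "'a cset \<Rightarrow> 'b cset \<Rightarrow> (nat \<Rightarrow> 'a \<Rightarrow> 'b) \<Rightarrow> bool" where
  "cs_hom X Y F \<longleftrightarrow>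
     (\<forall>k x. x \<in> cells X k \<longrightarrow> F k x \<in> cells Y k) \<and>
     (\<forall>k k' psi x. cmor k' k psi \<longrightarrow> x \<in> cells X k \<longrightarrow>
         F k' (act X k' k psi x) = act Y k' k psi (F k x))"

definition dp_hom :: "'a cset \<Rightarrow> 'a \<Rightarrow> 'a \<Rightarrow> 'b cset \<Rightarrow> 'b \<Rightarrow> 'b \<Rightarrow> (nat \<Rightarrow> 'a \<Rightarrow> 'b) \<Rightarrow> bool" where
  "dp_hom X a b Y u v F \<longleftrightarrow> cs_hom X Y F \<and> F 0 a = u \<and> F 0 b = v"

text \<open>The necklace (n_1,...,n_k) = cube^{n_1} v ... v cube^{n_k}, with its pushout computed
dimensionwise: a k-cell is (i, phi) with phi a k-cube of the i-th bead (beads 0-indexed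
internally), where the constant cube at the omega of bead i (i not last) is identified with
the constant cube at the alpha of bead i+1; we use the latter as canonical representative.\<close>

definition nec_norm :: "nat list \<Rightarrow> nat \<Rightarrow> nat \<times> cube \<Rightarrow> nat \<times> cube" where
  "nec_norm ns k x =
     (if Suc (fst x) < length ns \<and> snd x = constk k (omega_v (ns ! fst x))
      then (Suc (fst x), constk k (alpha_v (ns ! Suc (fst x)))) else x)"

definition nec_cells :: "nat list \<Rightarrow> nat \<Rightarrow> (nat \<times> cube) set" where
  "nec_cells ns k = {(i, phi). i < length ns \<and> cmor k (ns ! i) phi \<and>
      \<not> (Suc i < length ns \<and> phi = constk k (omega_v (ns ! i)))}"

definition necklace :: "nat list \<Rightarrow> (nat \<times> cube) cset" where
  "necklace ns = \<lparr> cells = nec_cells ns,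
      act = (\<lambda>k' k psi x. nec_norm ns k' (fst x, compose (verts k') (snd x) psi)) \<rparr>"

definition nec_alpha :: "nat list \<Rightarrow> nat \<times> cube" where
  "nec_alpha ns = (0, constk 0 (alpha_v (ns ! 0)))"

definition nec_omega :: "nat list \<Rightarrow> nat \<times> cube" where
  "nec_omega ns = (length ns - 1, constk 0 (omega_v (last ns)))"

definition nec_mor :: "nat list \<Rightarrow> nat list \<Rightarrow> (nat \<Rightarrow> nat \<times> cube \<Rightarrow> nat \<times> cube) \<Rightarrow> bool" where
  "nec_mor ns ms F \<longleftrightarrow>
     dp_hom (necklace ns) (nec_alpha ns) (nec_omega ns) (necklace ms) (nec_alpha ms) (nec_omega ms) F"

definition nec_agree :: "nat list \<Rightarrow> (nat \<Rightarrow> nat \<times> cube \<Rightarrow> 'b) \<Rightarrow> (nat \<Rightarrow> nat \<times> cube \<Rightarrow> 'b) \<Rightarrow> bool" where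
  "nec_agree ns F G \<longleftrightarrow> (\<forall>k. \<forall>x \<in> nec_cells ns k. F k x = G k x)"

definition bead :: "nat list \<Rightarrow> nat \<Rightarrow> nat \<Rightarrow> cube \<Rightarrow> nat \<times> cube" where
  "bead ns i k psi = nec_norm ns k (i, psi)"

text \<open>phi_1 * ... * phi_k : necklace ns -> cube^m = necklace [m], the map induced from the
pushout by the maps phi_i : cube^{n_i} -> cube^m (Yoneda: a cube morphism [1]^{n_i} -> [1]^m);
on bead i it is phi_i.\<close>
definition star_maps :: "cube list \<Rightarrow> nat \<Rightarrow> nat \<times> cube \<Rightarrow> nat \<times> cube" where
  "star_maps phis k x = (0, compose (verts k) (phis ! fst x) (snd x))"

definition is_decomp :: "nat list \<Rightarrow> nat \<Rightarrow> nat list list \<Rightarrow> bool" where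
  "is_decomp ns l As \<longleftrightarrow> length As = l \<and> (\<forall>A \<in> set As. A \<noteq> []) \<and> concat As = ns"

definition blk_off :: "nat list list \<Rightarrow> nat \<Rightarrow> nat" where
  "blk_off As j = sum_list (map length (take j As))"

definition blk_of :: "nat list list \<Rightarrow> nat \<Rightarrow> nat" where
  "blk_of As i = (LEAST j. i < blk_off As (Suc j))"

text \<open>f_1 v ... v f_l : necklace (concat As) -> necklace ms for f_j : A_j -> (m_j):
on the beads of block j it is (j-th bead of ms) o f_j.\<close>
definition wedge_maps :: "nat list list \<Rightarrow> nat list \<Rightarrow> (nat \<Rightarrow> nat \<times> cube \<Rightarrow> nat \<times> cube) list
    \<Rightarrow> nat \<Rightarrow> nat \<times> cube \<Rightarrow> nat \<times> cube" where
  "wedge_maps As ms fs k x =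
     (let j = blk_of As (fst x) in
      bead ms j k (snd ((fs ! j) k (fst x - blk_off As j, snd x))))"

definition to_point :: "nat \<Rightarrow> cube" where
  "to_point k = restrict (\<lambda>_. []) (verts k)"

text \<open>The restriction of F : necklace ns -> necklace ms to the i-th bead is constant,
i.e. factors through a single vertex v.\<close>
definition bead_restr_const :: "nat list \<Rightarrow> nat list \<Rightarrow> (nat \<Rightarrow> nat \<times> cube \<Rightarrow> nat \<times> cube) \<Rightarrow> nat \<Rightarrow> bool" where
  "bead_restr_const ns ms F i \<longleftrightarrow>
     (\<exists>v \<in> nec_cells ms 0. \<forall>k psi. cmor k (ns ! i) psi \<longrightarrow>
        F k (bead ns i k psi) = act (necklace ms) k 0 (to_point k) v)"

definition wedge_decomp :: "nat list \<Rightarrow> nat list \<Rightarrow> (nat \<Rightarrow> nat \<times> cube \<Rightarrow> nat \<times> cube)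
    \<Rightarrow> nat list list \<Rightarrow> (nat \<Rightarrow> nat \<times> cube \<Rightarrow> nat \<times> cube) list \<Rightarrow> bool" where
  "wedge_decomp ns ms F As fs \<longleftrightarrow>
     is_decomp ns (length ms) As \<and> length fs = length ms \<and>
     (\<forall>j < length ms. nec_mor (As ! j) [ms ! j] (fs ! j)) \<and>
     nec_agree ns F (wedge_maps As ms fs)"

end

theory Submission
  imports Defs
begin

definition idn :: "nat \<Rightarrow> cube" where "idn n = restrict id (verts n)"
definition le_bl :: "bool list \<Rightarrow> bool list \<Rightarrow> bool" where
  "le_bl x y = list_all2 (\<lambda>a b. a \<longrightarrow> b) x y"
definition cnt :: "bool list \<Rightarrow> nat" where "cnt x = length (filter id x)"

lemma cnt_append[simp]: "cnt (x @ y) = cnt x + cnt y" by (simp add: cnt_def)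
lemma cnt_Cons[simp]: "cnt (a # y) = (if a then 1 else 0) + cnt y" by (simp add: cnt_def)
lemma cnt_Nil[simp]: "cnt [] = 0" by (simp add: cnt_def)

lemma le_bl_length: "le_bl x y \<Longrightarrow> length x = length y"
  by (simp add: le_bl_def list_all2_lengthD)

lemma le_bl_Cons': "le_bl (a # x) (b # y) \<longleftrightarrow> (a \<longrightarrow> b) \<and> le_bl x y"
  by (simp add: le_bl_def)
lemma le_bl_Nil: "le_bl [] y \<longleftrightarrow> y = []" by (auto simp: le_bl_def)

lemma le_bl_take: "le_bl x y \<Longrightarrow> le_bl (take k x) (take k y)"
  by (simp add: le_bl_def list_all2_takeI)
lemma le_bl_drop: "le_bl x y \<Longrightarrow> le_bl (drop k x) (drop k y)"
  by (simp add: le_bl_def list_all2_dropI)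
lemma le_bl_app: "le_bl x y \<Longrightarrow> le_bl x' y' \<Longrightarrow> le_bl (x @ x') (y @ y')"
  by (simp add: le_bl_def list_all2_appendI)
lemma le_bl_Cons: "le_bl (a # x) (b # y) \<longleftrightarrow> (a \<longrightarrow> b) \<and> le_bl x y"
  by (simp add: le_bl_def)
lemma le_bl_nth: "le_bl x y \<Longrightarrow> k < length x \<Longrightarrow> x ! k \<Longrightarrow> y ! k"
  unfolding le_bl_def using list_all2_nthD by fastforce

lemma le_bl_cnt: "le_bl x y \<Longrightarrow> cnt x \<le> cnt y"
proof (induction x arbitrary: y)
  case Nil then show ?case by simp
next
  case (Cons a x)
  then obtain b y' where y: "y = b # y'" by (cases y) (auto simp: le_bl_def)
  then have "cnt x \<le> cnt y'" "a \<longrightarrow> b" using Cons by (auto simp: le_bl_Cons')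
  then show ?case using y by auto
qed

lemma le_bl_refl: "le_bl x x"
  by (simp add: le_bl_def list_all2_refl)
lemma le_bl_trans: "le_bl x y \<Longrightarrow> le_bl y z \<Longrightarrow> le_bl x z"
  unfolding le_bl_def by (rule list_all2_trans) auto
lemma le_bl_antisym: "le_bl x y \<Longrightarrow> le_bl y x \<Longrightarrow> x = y"
  unfolding le_bl_def
  by (rule list_all2_antisym) auto

lemma verts_iff[simp]: "x \<in> verts n \<longleftrightarrow> length x = n" by (simp add: verts_def)

lemma le_bl_alpha: "length x = n \<Longrightarrow> le_bl (alpha_v n) x"
  by (simp add: le_bl_def alpha_v_def list_all2_conv_all_nth)
lemma le_bl_omega: "length x = n \<Longrightarrow> le_bl x (omega_v n)"
  by (simp add: le_bl_def omega_v_def list_all2_conv_all_nth)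
lemma cnt_alpha[simp]: "cnt (alpha_v n) = 0" by (simp add: cnt_def alpha_v_def)
lemma cnt_omega[simp]: "cnt (omega_v n) = n" by (simp add: cnt_def omega_v_def)
lemma length_alpha[simp]: "length (alpha_v n) = n" by (simp add: alpha_v_def)
lemma length_omega[simp]: "length (omega_v n) = n" by (simp add: omega_v_def)
lemma alpha_ne_omega: "0 < n \<Longrightarrow> alpha_v n \<noteq> omega_v n"
  by (cases n) (auto simp: alpha_v_def omega_v_def)

lemma ins_coord_alt: "ins_coord i e x = take (i - 1) x @ e # drop (i - 1) x"
  by (simp add: ins_coord_def)

lemma cmor_fun: "cmor n m f \<Longrightarrow> f \<in> verts n \<rightarrow>\<^sub>E verts m"
proof (induction rule: cmor.induct)
  case (cmor_id n) then show ?case by (auto simp: idn_def)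
next
  case (cmor_face i n e) then show ?case by (auto simp: ins_coord_def)
next
  case (cmor_degen i n) then show ?case by (auto simp: del_coord_def)
next
  case (cmor_conn i n) then show ?case by (auto simp: conn_coord_def)
next
  case (cmor_comp n m f p g) then show ?case
    by (auto simp: compose_def PiE_iff extensional_def)
qed

lemma cmor_ext: "cmor n m f \<Longrightarrow> x \<notin> verts n \<Longrightarrow> f x = undefined"
  using cmor_fun by (auto simp: PiE_iff extensional_def)
lemma cmor_len: "cmor n m f \<Longrightarrow> length x = n \<Longrightarrow> length (f x) = m"
  using cmor_fun by (fastforce simp: PiE_iff)

lemma cmor_mono: "cmor n m f \<Longrightarrow> length x = n \<Longrightarrow> length y = n \<Longrightarrow> le_bl x y \<Longrightarrow>
   le_bl (f x) (f y) \<and> cnt (f y) + cnt x \<le> cnt (f x) + cnt y"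
proof (induction arbitrary: x y rule: cmor.induct)
  case (cmor_id n) then show ?case by simp
next
  case (cmor_face i n e)
  have c: "cnt (ins_coord i e z) = cnt z + (if e then 1 else 0)" for z
    unfolding ins_coord_def
    by (metis add.commute cnt_Cons cnt_append append_take_drop_id add.assoc)
  have "le_bl (ins_coord i e x) (ins_coord i e y)" using cmor_face
    by (auto simp: ins_coord_def le_bl_app le_bl_take le_bl_drop le_bl_Cons)
  then show ?case using c[of x] c[of y] le_bl_cnt[OF cmor_face(5)] cmor_face(3,4) by simp
next
  case (cmor_degen i n)
  have d: "z = take (i - 1) z @ z ! (i - 1) # drop i z" if "length z = Suc n" for z
    using id_take_nth_drop[of "i - 1" z] that cmor_degen by auto
  have "cnt x = cnt (del_coord i x) + (if x ! (i - 1) then 1 else 0)"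
       "cnt y = cnt (del_coord i y) + (if y ! (i - 1) then 1 else 0)"
    using d[of x] d[of y] cmor_degen unfolding del_coord_def
    by (metis add.commute cnt_Cons cnt_append add.assoc)+
  moreover have "x ! (i - 1) \<longrightarrow> y ! (i - 1)" using le_bl_nth[OF cmor_degen(5), of "i - 1"] cmor_degen by auto
  ultimately show ?case using cmor_degen
    by (auto simp: del_coord_def le_bl_app le_bl_take le_bl_drop)
next
  case (cmor_conn i n)
  have d: "z = take (i - 1) z @ z ! (i - 1) # z ! i # drop (i + 1) z" if "length z = Suc n" for z
  proof -
    have "z = take (i - 1) z @ z ! (i - 1) # drop i z"
      using id_take_nth_drop[of "i - 1" z] that cmor_conn by auto
    moreover have "drop i z = z ! i # drop (i + 1) z"
      using that cmor_conn by (simp add: Cons_nth_drop_Suc)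
    ultimately show ?thesis by simp
  qed
  have "cnt x = cnt (take (i - 1) x) + (if x ! (i - 1) then 1 else 0) + (if x ! i then 1 else 0) + cnt (drop (i+1) x)"
       "cnt y = cnt (take (i - 1) y) + (if y ! (i - 1) then 1 else 0) + (if y ! i then 1 else 0) + cnt (drop (i+1) y)"
    using d[of x] d[of y] cmor_conn
    by (metis (no_types, lifting) add.assoc cnt_Cons cnt_append)+
  moreover have "x ! (i - 1) \<longrightarrow> y ! (i - 1)" "x ! i \<longrightarrow> y ! i"
    using le_bl_nth[OF cmor_conn(5), of "i - 1"] le_bl_nth[OF cmor_conn(5), of i] cmor_conn by auto
  moreover have "cnt (take (i - 1) x) \<le> cnt (take (i - 1) y)" "cnt (drop (i+1) x) \<le> cnt (drop (i+1) y)"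
    using cmor_conn(5) by (auto intro!: le_bl_cnt le_bl_take le_bl_drop)
  ultimately show ?case using cmor_conn
    by (auto simp: conn_coord_def le_bl_app le_bl_take le_bl_drop le_bl_Cons)
next
  case (cmor_comp n m f p g)
  have 1: "le_bl (f x) (f y)" "cnt (f y) + cnt x \<le> cnt (f x) + cnt y"
    using cmor_comp.IH(1)[of x y] cmor_comp.prems by auto
  have "length (f x) = m" "length (f y) = m" using cmor_len[OF cmor_comp(1)] cmor_comp.prems by auto
  then have 2: "le_bl (g (f x)) (g (f y))" "cnt (g (f y)) + cnt (f x) \<le> cnt (g (f x)) + cnt (f y)"
    using cmor_comp.IH(2)[of "f x" "f y"] 1 by auto
  show ?case using 1 2 cmor_comp.prems by (auto simp: compose_def)
qed

lemma constk_eq_iff[simp]: "constk k v = constk k w \<longleftrightarrow> v = w"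
proof
  assume "constk k v = constk k w"
  then have "constk k v (replicate k False) = constk k w (replicate k False)" by simp
  then show "v = w" by (simp add: constk_def)
qed simp

lemma constk_app: "length x = k \<Longrightarrow> constk k v x = v" by (simp add: constk_def)

lemma compose_constk: "compose (verts k) f (constk k v) = constk k (f v)"
  by (auto simp: compose_def constk_def)

lemma compose_const_left: "cmor k n phi \<Longrightarrow> compose (verts k) (constk n v) phi = constk k v"
  using cmor_len[of k n phi] by (auto simp: compose_def constk_def)

lemma compose_idn_left: "cmor k n phi \<Longrightarrow> compose (verts k) (idn n) phi = phi"
  using cmor_len[of k n phi] cmor_ext[of k n phi] by (auto simp: compose_def idn_def)

lemma compose_idn_right: "cmor n m f \<Longrightarrow> compose (verts n) f (idn n) = f"
  using cmor_ext[of n m f] by (auto simp: compose_def idn_def)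

lemma cmor_idn: "cmor n n (idn n)" unfolding idn_def by (rule cmor_id)

lemma cmor_to_point: "cmor n 0 (to_point n)"
proof (induction n)
  case 0
  have "to_point 0 = restrict id (verts 0)" by (auto simp: to_point_def)
  then show ?case using cmor_id[of 0] by (simp only:)
next
  case (Suc n)
  have "cmor (Suc n) n (restrict (del_coord 1) (verts (Suc n)))" by (rule cmor_degen) auto
  from cmor_comp[OF this Suc]
  have "cmor (Suc n) 0 (compose (verts (Suc n)) (to_point n) (restrict (del_coord 1) (verts (Suc n))))" .
  moreover have "compose (verts (Suc n)) (to_point n) (restrict (del_coord 1) (verts (Suc n))) = to_point (Suc n)"
    by (auto simp: compose_def to_point_def del_coord_def)
  ultimately show ?case by simp
qed

lemma cmor_const0: "length v = m \<Longrightarrow> cmor 0 m (constk 0 v)"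
proof (induction v arbitrary: m)
  case Nil
  have "constk 0 [] = restrict id (verts 0)" by (auto simp: constk_def)
  then show ?case using cmor_id[of 0] Nil by (simp only: list.size)
next
  case (Cons e v)
  then obtain m' where m: "m = Suc m'" "length v = m'" by auto
  have "cmor m' (Suc m') (restrict (ins_coord 1 e) (verts m'))" by (rule cmor_face) auto
  from cmor_comp[OF Cons.IH[OF m(2)] this]
  have "cmor 0 (Suc m') (compose (verts 0) (restrict (ins_coord 1 e) (verts m')) (constk 0 v))" .
  moreover have "compose (verts 0) (restrict (ins_coord 1 e) (verts m')) (constk 0 v) = constk 0 (e # v)"
    using m by (auto simp: compose_def constk_def ins_coord_def)
  ultimately show ?case using m by simp
qed

lemma cmor_constk: "length v = m \<Longrightarrow> cmor n m (constk n v)"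
proof -
  assume "length v = m"
  from cmor_comp[OF cmor_to_point[of n] cmor_const0[OF this]]
  have "cmor n m (compose (verts n) (constk 0 v) (to_point n))" .
  moreover have "compose (verts n) (constk 0 v) (to_point n) = constk n v"
    by (auto simp: compose_def constk_def to_point_def)
  ultimately show ?thesis by simp
qed

lemma to_point_const: "compose (verts k) (constk 0 v) (to_point k) = constk k v"
  by (auto simp: compose_def constk_def to_point_def)

lemma cmor_ao: "cmor n m f \<Longrightarrow> le_bl (f (alpha_v n)) (f (omega_v n))"
  using cmor_mono[of n m f "alpha_v n" "omega_v n"] le_bl_alpha[of "omega_v n" n] by simp

lemma cmor_ao_cnt: "cmor n m f \<Longrightarrow> cnt (f (omega_v n)) \<le> cnt (f (alpha_v n)) + n"
  using cmor_mono[of n m f "alpha_v n" "omega_v n"] le_bl_alpha[of "omega_v n" n] by simp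

lemma cmor_const_eq: "cmor n m f \<Longrightarrow> f (alpha_v n) = f (omega_v n) \<Longrightarrow> f = constk n (f (alpha_v n))"
proof
  fix x assume f: "cmor n m f" and e: "f (alpha_v n) = f (omega_v n)"
  show "f x = constk n (f (alpha_v n)) x"
  proof (cases "length x = n")
    case True
    have "le_bl (f (alpha_v n)) (f x)" using cmor_mono[OF f, of "alpha_v n" x] le_bl_alpha[OF True] True by simp
    moreover have "le_bl (f x) (f (omega_v n))" using cmor_mono[OF f, of x "omega_v n"] le_bl_omega[OF True] True by simp
    ultimately have "f x = f (alpha_v n)" using e le_bl_antisym by metis
    then show ?thesis using True by (simp add: constk_def)
  next
    case False then show ?thesis using cmor_ext[OF f, of x] by (simp add: constk_def)
  qed
qed

section \<open>Necklace basics\<close>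

lemma nec_norm_simp: "nec_norm ns k (i, phi) = (if Suc i < length ns \<and> phi = constk k (omega_v (ns ! i))
      then (Suc i, constk k (alpha_v (ns ! Suc i))) else (i, phi))"
  by (simp add: nec_norm_def)

lemma nec_cells_iff: "(i, phi) \<in> nec_cells ns k \<longleftrightarrow> i < length ns \<and> cmor k (ns ! i) phi \<and>
      \<not> (Suc i < length ns \<and> phi = constk k (omega_v (ns ! i)))"
  by (simp add: nec_cells_def)

lemma nec_norm_cell: "(i, phi) \<in> nec_cells ns k \<Longrightarrow> nec_norm ns k (i, phi) = (i, phi)"
  by (auto simp: nec_norm_simp nec_cells_iff)

lemma nec_norm_single[simp]: "nec_norm [m] k x = x"
  by (simp add: nec_norm_def)

lemma act_nec: "act (necklace ns) k' k psi x = nec_norm ns k' (fst x, compose (verts k') (snd x) psi)"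
  by (simp add: necklace_def)
lemma cells_nec: "cells (necklace ns) = nec_cells ns"
  by (simp add: necklace_def)

lemma idn_alpha: "idn n (alpha_v n) = alpha_v n" by (simp add: idn_def)

lemma idn_cell: "i < length ns \<Longrightarrow> 0 < ns ! i \<Longrightarrow> (i, idn (ns ! i)) \<in> nec_cells ns (ns ! i)"
proof -
  assume a: "i < length ns" "0 < ns ! i"
  have "idn (ns ! i) \<noteq> constk (ns ! i) (omega_v (ns ! i))"
  proof
    assume "idn (ns ! i) = constk (ns ! i) (omega_v (ns ! i))"
    then have "idn (ns ! i) (alpha_v (ns ! i)) = constk (ns ! i) (omega_v (ns ! i)) (alpha_v (ns ! i))" by simp
    then show False using alpha_ne_omega[OF a(2)] by (simp add: idn_alpha constk_app)
  qed
  then show ?thesis using a cmor_idn by (simp add: nec_cells_iff)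
qed

definition Fj :: "nat list \<Rightarrow> (nat \<Rightarrow> nat \<times> cube \<Rightarrow> nat \<times> cube) \<Rightarrow> nat \<Rightarrow> nat" where
  "Fj ns F i = fst (F (ns ! i) (i, idn (ns ! i)))"
definition Fp :: "nat list \<Rightarrow> (nat \<Rightarrow> nat \<times> cube \<Rightarrow> nat \<times> cube) \<Rightarrow> nat \<Rightarrow> cube" where
  "Fp ns F i = snd (F (ns ! i) (i, idn (ns ! i)))"

lemma nec_mor_cell: "nec_mor ns ms F \<Longrightarrow> x \<in> nec_cells ns k \<Longrightarrow> F k x \<in> nec_cells ms k"
  unfolding nec_mor_def dp_hom_def cs_hom_def cells_nec by blast

lemma nec_mor_nat: "nec_mor ns ms F \<Longrightarrow> cmor k' k psi \<Longrightarrow> x \<in> nec_cells ns k \<Longrightarrow>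
    F k' (nec_norm ns k' (fst x, compose (verts k') (snd x) psi)) = nec_norm ms k' (fst (F k x), compose (verts k') (snd (F k x)) psi)"
  unfolding nec_mor_def dp_hom_def cs_hom_def cells_nec act_nec by blast

lemma nec_mor_alpha: "nec_mor ns ms F \<Longrightarrow> F 0 (nec_alpha ns) = nec_alpha ms"
  by (simp add: nec_mor_def dp_hom_def)
lemma nec_mor_omega: "nec_mor ns ms F \<Longrightarrow> F 0 (nec_omega ns) = nec_omega ms"
  by (simp add: nec_mor_def dp_hom_def)

lemma F_top:
  assumes "nec_mor ns ms F" "i < length ns" "0 < ns ! i"
  shows "F (ns ! i) (i, idn (ns ! i)) = (Fj ns F i, Fp ns F i)"
    "Fj ns F i < length ms" "cmor (ns ! i) (ms ! Fj ns F i) (Fp ns F i)"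
    "\<not> (Suc (Fj ns F i) < length ms \<and> Fp ns F i = constk (ns ! i) (omega_v (ms ! Fj ns F i)))"
  using nec_mor_cell[OF assms(1) idn_cell[OF assms(2,3)]]
  by (auto simp: Fj_def Fp_def nec_cells_def)

lemma F_nat:
  assumes "nec_mor ns ms F" "(i, phi) \<in> nec_cells ns k" "0 < ns ! i"
  shows "F k (i, phi) = nec_norm ms k (Fj ns F i, compose (verts k) (Fp ns F i) phi)"
proof -
  have c: "i < length ns" "cmor k (ns ! i) phi" using assms(2) by (auto simp: nec_cells_iff)
  have "F k (nec_norm ns k (i, compose (verts k) (idn (ns ! i)) phi)) =
     nec_norm ms k (fst (F (ns ! i) (i, idn (ns ! i))), compose (verts k) (snd (F (ns ! i) (i, idn (ns ! i)))) phi)"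
    using nec_mor_nat[OF assms(1) c(2) idn_cell[OF c(1) assms(3)]] by simp
  then show ?thesis using compose_idn_left[OF c(2)] nec_norm_cell[OF assms(2)] by (simp add: Fj_def Fp_def)
qed

lemma F_vert:
  assumes "nec_mor ns ms F" "i < length ns" "0 < ns ! i" "length v = ns ! i"
  shows "F 0 (nec_norm ns 0 (i, constk 0 v)) = nec_norm ms 0 (Fj ns F i, constk 0 (Fp ns F i v))"
proof -
  have "F 0 (nec_norm ns 0 (i, compose (verts 0) (idn (ns ! i)) (constk 0 v))) =
     nec_norm ms 0 (fst (F (ns ! i) (i, idn (ns ! i))), compose (verts 0) (snd (F (ns ! i) (i, idn (ns ! i)))) (constk 0 v))"
    using nec_mor_nat[OF assms(1) cmor_const0[OF assms(4)] idn_cell[OF assms(2,3)]] by simp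
  then show ?thesis using compose_idn_left[OF cmor_const0[OF assms(4)]]
    by (simp add: Fj_def Fp_def compose_constk)
qed

lemma norm_alpha: "ns \<noteq> [] \<Longrightarrow> 0 < ns ! 0 \<Longrightarrow> nec_norm ns 0 (0, constk 0 (alpha_v (ns ! 0))) = nec_alpha ns"
  using alpha_ne_omega[of "ns ! 0"] by (auto simp: nec_norm_simp nec_alpha_def)
lemma norm_omega: "ns \<noteq> [] \<Longrightarrow> nec_norm ns 0 (length ns - 1, constk 0 (omega_v (ns ! (length ns - 1)))) = nec_omega ns"
  by (auto simp: nec_norm_simp nec_omega_def last_conv_nth)
lemma norm_glue: "Suc i < length ns \<Longrightarrow> 0 < ns ! Suc i \<Longrightarrow>
   nec_norm ns 0 (i, constk 0 (omega_v (ns ! i))) = nec_norm ns 0 (Suc i, constk 0 (alpha_v (ns ! Suc i)))"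
  using alpha_ne_omega[of "ns ! Suc i"] by (auto simp: nec_norm_simp)

lemma cmor_Pi: "cmor n m f \<Longrightarrow> f \<in> verts n \<rightarrow> verts m"
  using cmor_fun by (auto simp: PiE_iff)

lemma star_nec_mor:
  assumes len: "length phis = length ns" and cm: "\<forall>i < length ns. cmor (ns ! i) m (phis ! i)"
    and ch0: "(phis ! 0) (alpha_v (ns ! 0)) = alpha_v m"
    and chs: "\<forall>i. Suc i < length ns \<longrightarrow> (phis ! i) (omega_v (ns ! i)) = (phis ! Suc i) (alpha_v (ns ! Suc i))"
    and chl: "(phis ! (length ns - 1)) (omega_v (ns ! (length ns - 1))) = omega_v m"
    and ne: "ns \<noteq> []"
  shows "nec_mor ns [m] (star_maps phis)"
  unfolding nec_mor_def dp_hom_def cs_hom_def cells_nec act_nec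
proof (intro conjI allI impI)
  fix k x assume x: "x \<in> nec_cells ns k"
  obtain i phi where xi: "x = (i, phi)" by (cases x)
  then show "star_maps phis k x \<in> nec_cells [m] k"
    using x cm by (auto simp: nec_cells_iff star_maps_def intro: cmor_comp)
next
  fix k k' psi x assume psi: "cmor k' k psi" and x: "x \<in> nec_cells ns k"
  obtain i phi where xi: "x = (i, phi)" by (cases x)
  have i: "i < length ns" "cmor k (ns ! i) phi" using x xi by (auto simp: nec_cells_iff)
  have A: "compose (verts k') (compose (verts k) (phis ! i) phi) psi = compose (verts k') (phis ! i) (compose (verts k') phi psi)"
    by (rule compose_assoc[OF cmor_Pi[OF psi], symmetric])
  show "star_maps phis k' (nec_norm ns k' (fst x, compose (verts k') (snd x) psi)) =
         nec_norm [m] k' (fst (star_maps phis k x), compose (verts k') (snd (star_maps phis k x)) psi)"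
  proof (cases "Suc i < length ns \<and> compose (verts k') phi psi = constk k' (omega_v (ns ! i))")
    case True
    then show ?thesis using xi A chs by (simp add: nec_norm_simp star_maps_def compose_constk)
  next
    case False
    then show ?thesis using xi A by (auto simp: nec_norm_simp star_maps_def)
  qed
next
  show "star_maps phis 0 (nec_alpha ns) = nec_alpha [m]"
    using ch0 by (simp add: star_maps_def nec_alpha_def compose_constk)
next
  show "star_maps phis 0 (nec_omega ns) = nec_omega [m]"
    using chl ne by (simp add: star_maps_def nec_omega_def compose_constk last_conv_nth)
qed

lemma telescope:
  assumes cm: "\<forall>i < length ns. cmor (ns ! i) m (phis ! i)"
    and ch0: "(phis ! 0) (alpha_v (ns ! 0)) = alpha_v m"
    and chs: "\<forall>i. Suc i < length ns \<longrightarrow> (phis ! i) (omega_v (ns ! i)) = (phis ! Suc i) (alpha_v (ns ! Suc i))"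
  shows "t < length ns \<Longrightarrow> cnt ((phis ! t) (omega_v (ns ! t))) \<le> sum_list (take (Suc t) ns)"
proof (induction t)
  case 0
  then show ?case using cmor_ao_cnt[of "ns ! 0" m "phis ! 0"] cm ch0
    by (cases ns) auto
next
  case (Suc t)
  have "cnt ((phis ! Suc t) (omega_v (ns ! Suc t))) \<le> cnt ((phis ! Suc t) (alpha_v (ns ! Suc t))) + ns ! Suc t"
    using cmor_ao_cnt cm Suc.prems by blast
  also have "\<dots> = cnt ((phis ! t) (omega_v (ns ! t))) + ns ! Suc t" using chs Suc.prems by simp
  also have "\<dots> \<le> sum_list (take (Suc t) ns) + ns ! Suc t" using Suc by simp
  also have "\<dots> = sum_list (take (Suc (Suc t)) ns)" using Suc.prems by (simp add: take_Suc_conv_app_nth)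
  finally show ?case .
qed

lemma part1:
  assumes ne: "ns \<noteq> []" and pos: "\<forall>n \<in> set ns. 0 < n" and m: "0 < m" and F: "nec_mor ns [m] F"
  shows "(\<exists>!phis. length phis = length ns \<and>
                (\<forall>i < length ns. cmor (ns ! i) m (phis ! i)) \<and>
                (phis ! 0) (alpha_v (ns ! 0)) = alpha_v m \<and>
                (\<forall>i. Suc i < length ns \<longrightarrow>
                    (phis ! i) (omega_v (ns ! i)) = (phis ! Suc i) (alpha_v (ns ! Suc i))) \<and>
                (phis ! (length ns - 1)) (omega_v (last ns)) = omega_v m \<and>
                nec_agree ns F (star_maps phis)) \<and>
            m \<le> sum_list ns"
proof -
  have posi: "0 < ns ! i" if "i < length ns" for i using pos that by auto
  define phis where "phis = map (Fp ns F) [0..<length ns]"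
  have j0: "Fj ns F i = 0" if "i < length ns" for i using F_top(2)[OF F that posi[OF that]] by simp
  have len: "length phis = length ns" by (simp add: phis_def)
  have cm: "\<forall>i < length ns. cmor (ns ! i) m (phis ! i)"
    using F_top(3)[OF F _ posi] j0 by (auto simp: phis_def)
  have l0: "0 < length ns" using ne by simp
  have ch0: "(phis ! 0) (alpha_v (ns ! 0)) = alpha_v m"
    using F_vert[OF F l0 posi[OF l0], of "alpha_v (ns ! 0)"] norm_alpha[OF ne posi[OF l0]] nec_mor_alpha[OF F]
      j0[OF l0] l0
    by (simp add: phis_def nec_alpha_def)
  have chs: "\<forall>i. Suc i < length ns \<longrightarrow> (phis ! i) (omega_v (ns ! i)) = (phis ! Suc i) (alpha_v (ns ! Suc i))"
  proof (intro allI impI)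
    fix i assume i: "Suc i < length ns"
    have "F 0 (nec_norm ns 0 (i, constk 0 (omega_v (ns ! i)))) = F 0 (nec_norm ns 0 (Suc i, constk 0 (alpha_v (ns ! Suc i))))"
      using norm_glue[OF i posi[OF i]] by simp
    then show "(phis ! i) (omega_v (ns ! i)) = (phis ! Suc i) (alpha_v (ns ! Suc i))"
      using F_vert[OF F _ posi, of i "omega_v (ns ! i)"] F_vert[OF F i posi[OF i], of "alpha_v (ns ! Suc i)"]
        j0[OF i] j0[of i] i
      by (simp add: phis_def)
  qed
  have ll: "length ns - 1 < length ns" using l0 by simp
  have chl: "(phis ! (length ns - 1)) (omega_v (last ns)) = omega_v m"
    using F_vert[OF F ll posi[OF ll], of "omega_v (ns ! (length ns - 1))"] norm_omega[OF ne] nec_mor_omega[OF F]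
      j0[OF ll] ll
    by (simp add: phis_def nec_omega_def last_conv_nth[OF ne])
  have ag: "nec_agree ns F (star_maps phis)"
    unfolding nec_agree_def
  proof (intro allI ballI)
    fix k x assume x: "x \<in> nec_cells ns k"
    obtain i phi where xi: "x = (i, phi)" by (cases x)
    have i: "i < length ns" using x xi by (simp add: nec_cells_iff)
    show "F k x = star_maps phis k x"
      using F_nat[OF F x[unfolded xi] posi[OF i]] j0[OF i] i xi by (simp add: star_maps_def phis_def)
  qed
  have uniq: "psis = phis" if "length psis = length ns" "nec_agree ns F (star_maps psis)"
    "\<forall>i < length ns. cmor (ns ! i) m (psis ! i)" for psis
  proof (rule nth_equalityI)
    show "length psis = length phis" using that len by simp
    fix i assume "i < length psis"
    then have i: "i < length ns" using that by simp
    have "F (ns ! i) (i, idn (ns ! i)) = star_maps psis (ns ! i) (i, idn (ns ! i))"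
      using that(2) idn_cell[OF i posi[OF i]] by (simp add: nec_agree_def)
    then show "psis ! i = phis ! i"
      using F_top(1)[OF F i posi[OF i]] compose_idn_right[of "ns ! i" m "psis ! i"] that(3) i
      by (simp add: star_maps_def phis_def)
  qed
  have "m \<le> sum_list ns"
  proof -
    have "cnt ((phis ! (length ns - 1)) (omega_v (ns ! (length ns - 1)))) \<le> sum_list (take (Suc (length ns - 1)) ns)"
      using telescope[OF cm ch0 chs ll] .
    then show ?thesis using chl l0 by (simp add: last_conv_nth[OF ne])
  qed
  then show ?thesis using len cm ch0 chs chl ag uniq by blast
qed

section \<open>Blocks\<close>

lemma blk_off_0[simp]: "blk_off As 0 = 0" by (simp add: blk_off_def)

lemma blk_off_Suc: "j < length As \<Longrightarrow> blk_off As (Suc j) = blk_off As j + length (As ! j)"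
  by (simp add: blk_off_def take_Suc_conv_app_nth)

lemma blk_off_len: "blk_off As (length As) = length (concat As)"
  by (simp add: blk_off_def length_concat)

lemma blk_off_mono: "j \<le> j' \<Longrightarrow> blk_off As j \<le> blk_off As j'"
proof -
  assume "j \<le> j'"
  then obtain d where "j' = j + d" by (auto simp: le_iff_add)
  then show ?thesis by (simp add: blk_off_def take_add)
qed

lemma blk_off_le: "blk_off As j \<le> length (concat As)"
proof -
  have "blk_off As j = length (concat (take j As))" by (simp add: blk_off_def length_concat)
  also have "\<dots> \<le> length (concat As)"
    by (metis append_take_drop_id concat_append le_add1 length_append)
  finally show ?thesis .
qed

lemma drop_blk_off: "drop (blk_off As j) (concat As) = concat (drop j As)"
proof -
  have "concat As = concat (take j As) @ concat (drop j As)"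
    by (metis append_take_drop_id concat_append)
  moreover have "blk_off As j = length (concat (take j As))" by (simp add: blk_off_def length_concat)
  ultimately show ?thesis by (metis append_eq_conv_conj)
qed

lemma nth_concat_off: "j < length As \<Longrightarrow> i' < length (As ! j) \<Longrightarrow> concat As ! (blk_off As j + i') = As ! j ! i'"
proof -
  assume a: "j < length As" "i' < length (As ! j)"
  have "concat (drop j As) = As ! j @ concat (drop (Suc j) As)" using a by (simp add: Cons_nth_drop_Suc[symmetric])
  moreover have "blk_off As j + i' < length (concat As)" using blk_off_Suc[OF a(1)] blk_off_le[of As "Suc j"] a by simp
  ultimately show ?thesis using drop_blk_off[of As j] a
    by (metis add.commute nth_append_left nth_drop blk_off_le le_add_diff_inverse2 less_le_trans le_add1 le_add_diff_inverse nat_le_linear)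
qed

lemma blk_of_props: "i < length (concat As) \<Longrightarrow>
   blk_of As i < length As \<and> blk_off As (blk_of As i) \<le> i \<and> i < blk_off As (Suc (blk_of As i))"
proof -
  assume i: "i < length (concat As)"
  have ne: "As \<noteq> []" using i by auto
  have ex: "i < blk_off As (Suc (length As - 1))" using i ne blk_off_len[of As] by simp
  have 1: "i < blk_off As (Suc (blk_of As i))" unfolding blk_of_def by (rule LeastI[of "\<lambda>j. i < blk_off As (Suc j)", OF ex])
  have 2: "blk_of As i \<le> length As - 1" unfolding blk_of_def by (rule Least_le[of "\<lambda>j. i < blk_off As (Suc j)", OF ex])
  have 3: "blk_off As (blk_of As i) \<le> i"
  proof (cases "blk_of As i")
    case 0 then show ?thesis by simp
  next
    case (Suc p)
    have "\<not> i < blk_off As (Suc p)" using not_less_Least[of p "\<lambda>j. i < blk_off As (Suc j)"] Suc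
      unfolding blk_of_def by simp
    then show ?thesis using Suc by simp
  qed
  have "length As > 0" using ne by simp
  then show ?thesis using 1 2 3 by linarith
qed

lemma blk_of_eq: "blk_off As j \<le> i \<Longrightarrow> i < blk_off As (Suc j) \<Longrightarrow> blk_of As i = j"
  unfolding blk_of_def
proof (rule Least_equality)
  fix y assume a: "blk_off As j \<le> i" "i < blk_off As (Suc y)"
  show "j \<le> y"
  proof (rule ccontr)
    assume "\<not> j \<le> y"
    then have "blk_off As (Suc y) \<le> blk_off As j" by (intro blk_off_mono) simp
    then show False using a by simp
  qed
qed

lemma blk_of_iff: "i < length (concat As) \<Longrightarrow> blk_of As i = j \<longleftrightarrow> blk_off As j \<le> i \<and> i < blk_off As (Suc j)"
  using blk_of_props blk_of_eq by metis

lemma blk_off_card: "j \<le> length As \<Longrightarrow> {i. i < length (concat As) \<and> blk_of As i < j} = {..<blk_off As j}"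
proof -
  assume j: "j \<le> length As"
  have "i < length (concat As) \<and> blk_of As i < j \<longleftrightarrow> i < blk_off As j" for i
  proof
    assume a: "i < length (concat As) \<and> blk_of As i < j"
    then have "i < blk_off As (Suc (blk_of As i))" using blk_of_props by blast
    moreover have "blk_off As (Suc (blk_of As i)) \<le> blk_off As j" using a by (intro blk_off_mono) simp
    ultimately show "i < blk_off As j" by simp
  next
    assume a: "i < blk_off As j"
    then have i: "i < length (concat As)" using blk_off_le[of As j] by simp
    have "blk_of As i < j"
    proof (rule ccontr)
      assume "\<not> blk_of As i < j"
      then have "blk_off As j \<le> blk_off As (blk_of As i)" by (intro blk_off_mono) simp
      then show False using a blk_of_props[OF i] by simp
    qed
    then show "i < length (concat As) \<and> blk_of As i < j" using i by simp
  qed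
  then show ?thesis by auto
qed

lemma blk_take: "j < length As \<Longrightarrow> As ! j = take (length (As ! j)) (drop (blk_off As j) (concat As))"
  by (simp add: drop_blk_off Cons_nth_drop_Suc[symmetric])

lemma blk_eq:
  assumes d: "is_decomp ns l As" "is_decomp ns l As'" and e: "\<forall>i < length ns. blk_of As i = blk_of As' i"
  shows "As = As'"
proof -
  have c: "concat As = ns" "concat As' = ns" "length As = l" "length As' = l" using d by (auto simp: is_decomp_def)
  have off: "blk_off As j = blk_off As' j" if "j \<le> l" for j
  proof -
    have "{i. i < length (concat As) \<and> blk_of As i < j} = {i. i < length (concat As') \<and> blk_of As' i < j}"
      using e c by auto
    then show ?thesis using blk_off_card[of j As] blk_off_card[of j As'] that c by simp
  qed
  show ?thesis
  proof (rule nth_equalityI)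
    show "length As = length As'" using c by simp
    fix j assume j: "j < length As"
    have L: "length (As ! j) = length (As' ! j)"
      using off[of j] off[of "Suc j"] blk_off_Suc[of j As] blk_off_Suc[of j As'] j c by simp
    have "As ! j = take (length (As ! j)) (drop (blk_off As j) (concat As))"
      using j by (simp add: drop_blk_off Cons_nth_drop_Suc[symmetric])
    moreover have "As' ! j = take (length (As' ! j)) (drop (blk_off As' j) (concat As'))"
      using blk_take[of j As'] j c(3,4) by simp
    ultimately show "As ! j = As' ! j" using L off[of j] j c by simp
  qed
qed

lemma blk_off_app: "j \<le> length xs \<Longrightarrow> blk_off (xs @ ys) j = blk_off xs j"
  by (simp add: blk_off_def)

lemma decomp_exists:
  assumes b0: "b 0 = 0" and bs: "\<forall>i. Suc i < length ns \<longrightarrow> b (Suc i) = b i \<or> b (Suc i) = Suc (b i)"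
  shows "0 < k \<Longrightarrow> k \<le> length ns \<Longrightarrow> \<exists>As. is_decomp (take k ns) (Suc (b (k - 1))) As \<and> (\<forall>i<k. blk_of As i = b i)"
proof (induction k)
  case 0 then show ?case by simp
next
  case (Suc k)
  show ?case
  proof (cases "k = 0")
    case True
    have t: "take 1 ns = [ns ! 0]" using Suc.prems by (cases ns) auto
    have "blk_of [[ns ! 0]] 0 = 0" by (rule blk_of_eq) (auto simp: blk_off_def)
    then show ?thesis using True t b0 by (intro exI[of _ "[[ns ! 0]]"]) (auto simp: is_decomp_def)
  next
    case False
    then obtain As' where IH: "is_decomp (take k ns) (Suc (b (k - 1))) As'" "\<forall>i<k. blk_of As' i = b i"
      using Suc by auto
    define x where "x = ns ! k"
    define L where "L = length As'"
    have kl: "k < length ns" using Suc.prems by simp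
    have tk: "take (Suc k) ns = take k ns @ [x]" using kl by (simp add: x_def take_Suc_conv_app_nth)
    have cA: "concat As' = take k ns" "L = Suc (b (k - 1))" "\<forall>A\<in>set As'. A \<noteq> []"
      using IH(1) by (auto simp: is_decomp_def L_def)
    have lc: "length (concat As') = k" using cA kl by simp
    have pr: "blk_of As' i < L \<and> blk_off As' (blk_of As' i) \<le> i \<and> i < blk_off As' (Suc (blk_of As' i))" if "i < k" for i
      using blk_of_props[of i As'] that lc by (simp add: L_def)
    have bk: "b k = b (k - 1) \<or> b k = Suc (b (k - 1))" using bs[rule_format, of "k - 1"] kl False by simp
    show ?thesis
    proof (cases "b k = b (k - 1)")
      case True
      define As where "As = butlast As' @ [last As' @ [x]]"
      have ne: "As' \<noteq> []" using cA by (auto simp: L_def)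
      have As'eq: "As' = butlast As' @ [last As']" using ne by simp
      have lenA: "length As = L" using ne by (simp add: As_def L_def)
      have c1: "concat As' = concat (butlast As') @ last As'" by (subst As'eq) simp
      have concA: "concat As = take (Suc k) ns"
        using c1 tk cA(1) by (simp add: As_def)
      have offeq: "blk_off As j = blk_off As' j" if "j \<le> L - 1" for j
      proof -
        have "blk_off As j = blk_off (butlast As') j" using that ne by (simp add: As_def blk_off_app L_def)
        also have "\<dots> = blk_off (butlast As' @ [last As']) j"
          using blk_off_app[of j "butlast As'" "[last As']"] that ne by (simp add: L_def)
        finally show ?thesis using As'eq by (simp only:)
      qed
      have offL: "blk_off As L = Suc k" using blk_off_len[of As] lenA concA kl by simp
      have "\<forall>A\<in>set As. A \<noteq> []" using cA(3) by (auto simp: As_def dest: in_set_butlastD)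
      then have dec: "is_decomp (take (Suc k) ns) (Suc (b (Suc k - 1))) As"
        using concA lenA cA(2) True unfolding is_decomp_def by simp
      have bl: "blk_of As i = b i" if "i < Suc k" for i
      proof (cases "i < k")
        case True
        have j: "b i < L" "blk_off As' (b i) \<le> i" "i < blk_off As' (Suc (b i))" using pr[OF True] IH(2) True by auto
        have "blk_off As (b i) \<le> i" using offeq[of "b i"] j by simp
        moreover have "i < blk_off As (Suc (b i))"
        proof (cases "Suc (b i) \<le> L - 1")
          case True then show ?thesis using offeq j by simp
        next
          case False then have "Suc (b i) = L" using j by simp
          then show ?thesis using offL \<open>i < k\<close> by simp
        qed
        ultimately show ?thesis by (rule blk_of_eq)
      next
        case False
        then have ik: "i = k" using that by simp
        have km: "k - 1 < k" using \<open>k \<noteq> 0\<close> by simp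
        have "blk_off As' (b (k - 1)) \<le> k - 1" using pr[OF km] IH(2) km by auto
        then have "blk_off As (b k) \<le> k" using offeq[of "b k"] True cA by simp
        moreover have "k < blk_off As (Suc (b k))" using offL True cA by simp
        ultimately show ?thesis using ik by (intro blk_of_eq) auto
      qed
      show ?thesis using dec bl by blast
    next
      case False
      then have bk': "b k = Suc (b (k - 1))" using bk by simp
      define As where "As = As' @ [[x]]"
      have lenA: "length As = Suc L" by (simp add: As_def L_def)
      have concA: "concat As = take (Suc k) ns" using tk cA by (simp add: As_def)
      have offeq: "blk_off As j = blk_off As' j" if "j \<le> L" for j
        using that by (simp add: As_def blk_off_app L_def)
      have offL: "blk_off As (Suc L) = Suc k" using blk_off_len[of As] lenA concA kl by simp
      have dec: "is_decomp (take (Suc k) ns) (Suc (b (Suc k - 1))) As"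
        using concA lenA cA bk' unfolding is_decomp_def As_def by auto
      have bl: "blk_of As i = b i" if "i < Suc k" for i
      proof (cases "i < k")
        case True
        have j: "b i < L" "blk_off As' (b i) \<le> i" "i < blk_off As' (Suc (b i))" using pr[OF True] IH(2) True by auto
        show ?thesis using offeq[of "b i"] offeq[of "Suc (b i)"] j by (intro blk_of_eq) auto
      next
        case False
        then have ik: "i = k" using that by simp
        have "blk_off As L = k" using offeq[of L] blk_off_len[of As'] lc by (simp add: L_def)
        then show ?thesis using ik bk' cA offL by (intro blk_of_eq) auto
      qed
      show ?thesis using dec bl by blast
    qed
  qed
qed

lemma norm_vert_eq: "nec_norm ms 0 (j, constk 0 v) = nec_norm ms 0 (j', constk 0 v') \<Longrightarrow>
   (j = j' \<and> v = v') \<or> (j' = Suc j \<and> Suc j < length ms \<and> v = omega_v (ms ! j) \<and> v' = alpha_v (ms ! j')) \<or>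
   (j = Suc j' \<and> Suc j' < length ms \<and> v' = omega_v (ms ! j') \<and> v = alpha_v (ms ! j))"
  by (auto simp: nec_norm_simp split: if_splits)

lemma le_alpha_eq: "le_bl x (alpha_v n) \<Longrightarrow> x = alpha_v n"
  using le_bl_alpha le_bl_antisym le_bl_length by (metis length_alpha)
lemma le_omega_eq: "le_bl (omega_v n) x \<Longrightarrow> x = omega_v n"
  using le_bl_omega le_bl_antisym le_bl_length by (metis length_omega)

definition bb :: "nat list \<Rightarrow> nat list \<Rightarrow> (nat \<Rightarrow> nat \<times> cube \<Rightarrow> nat \<times> cube) \<Rightarrow> nat \<Rightarrow> nat" where
  "bb ns ms F i = (if 0 < Fj ns F i \<and> Fp ns F i (omega_v (ns ! i)) = alpha_v (ms ! Fj ns F i)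
     then Fj ns F i - 1 else Fj ns F i)"
definition chi :: "nat list \<Rightarrow> nat list \<Rightarrow> (nat \<Rightarrow> nat \<times> cube \<Rightarrow> nat \<times> cube) \<Rightarrow> nat \<Rightarrow> cube" where
  "chi ns ms F i = (if bb ns ms F i = Fj ns F i then Fp ns F i else constk (ns ! i) (omega_v (ms ! bb ns ms F i)))"

context
  fixes ns ms :: "nat list" and F :: "nat \<Rightarrow> nat \<times> cube \<Rightarrow> nat \<times> cube"
  assumes ne: "ns \<noteq> []" and me: "ms \<noteq> []" and pos: "\<forall>n \<in> set ns. 0 < n" and mpos: "\<forall>m \<in> set ms. 0 < m"
    and F: "nec_mor ns ms F"
begin

lemma posi: "i < length ns \<Longrightarrow> 0 < ns ! i" using pos by auto
lemma mposi: "j < length ms \<Longrightarrow> 0 < ms ! j" using mpos by auto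

lemma Ft: "i < length ns \<Longrightarrow> Fj ns F i < length ms \<and> cmor (ns ! i) (ms ! Fj ns F i) (Fp ns F i) \<and>
    \<not> (Suc (Fj ns F i) < length ms \<and> Fp ns F i = constk (ns ! i) (omega_v (ms ! Fj ns F i)))"
  using F_top[OF F _ posi] by blast

lemma az: "i < length ns \<Longrightarrow> le_bl (Fp ns F i (alpha_v (ns ! i))) (Fp ns F i (omega_v (ns ! i)))"
  using Ft cmor_ao by blast

lemma azlen: "i < length ns \<Longrightarrow> length (Fp ns F i v) = ms ! Fj ns F i \<or> length v \<noteq> ns ! i"
  using Ft cmor_len by blast

lemma J0: "Fj ns F 0 = 0 \<and> Fp ns F 0 (alpha_v (ns ! 0)) = alpha_v (ms ! 0)"
proof -
  have l0: "0 < length ns" using ne by simp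
  have "nec_norm ms 0 (Fj ns F 0, constk 0 (Fp ns F 0 (alpha_v (ns ! 0)))) = nec_alpha ms"
    using F_vert[OF F l0 posi[OF l0], of "alpha_v (ns ! 0)"] norm_alpha[OF ne posi[OF l0]] nec_mor_alpha[OF F] by simp
  then show ?thesis by (auto simp: nec_norm_simp nec_alpha_def split: if_splits)
qed

lemma glue: "Suc i < length ns \<Longrightarrow> nec_norm ms 0 (Fj ns F i, constk 0 (Fp ns F i (omega_v (ns ! i)))) =
    nec_norm ms 0 (Fj ns F (Suc i), constk 0 (Fp ns F (Suc i) (alpha_v (ns ! Suc i))))"
proof -
  assume i: "Suc i < length ns"
  have "F 0 (nec_norm ns 0 (i, constk 0 (omega_v (ns ! i)))) = F 0 (nec_norm ns 0 (Suc i, constk 0 (alpha_v (ns ! Suc i))))"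
    using norm_glue[OF i posi[OF i]] by simp
  then show ?thesis
    using F_vert[OF F _ posi, of i "omega_v (ns ! i)"] F_vert[OF F i posi[OF i], of "alpha_v (ns ! Suc i)"] i by simp
qed

lemma Jlast: "Fj ns F (length ns - 1) = length ms - 1 \<and>
   Fp ns F (length ns - 1) (omega_v (ns ! (length ns - 1))) = omega_v (ms ! (length ms - 1))"
proof -
  have ll: "length ns - 1 < length ns" using ne by simp
  have e: "nec_norm ms 0 (Fj ns F (length ns - 1), constk 0 (Fp ns F (length ns - 1) (omega_v (ns ! (length ns - 1))))) = nec_omega ms"
    using F_vert[OF F ll posi[OF ll], of "omega_v (ns ! (length ns - 1))"] norm_omega[OF ne] nec_mor_omega[OF F] by simp
  have ml: "0 < ms ! (length ms - 1)" using mposi me by simp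
  show ?thesis
  proof (cases "Suc (Fj ns F (length ns - 1)) < length ms \<and> constk 0 (Fp ns F (length ns - 1) (omega_v (ns ! (length ns - 1)))) = constk 0 (omega_v (ms ! Fj ns F (length ns - 1)))")
    case True
    then show ?thesis using e alpha_ne_omega[OF ml] by (auto simp: nec_norm_simp nec_omega_def last_conv_nth[OF me])
  next
    case False
    then show ?thesis using e by (auto simp: nec_norm_simp nec_omega_def last_conv_nth[OF me])
  qed
qed

lemma bb_lt: "i < length ns \<Longrightarrow> bb ns ms F i < length ms"
  using Ft[of i] by (auto simp: bb_def)

lemma chi_cmor: "i < length ns \<Longrightarrow> cmor (ns ! i) (ms ! bb ns ms F i) (chi ns ms F i)"
  using Ft[of i] by (auto simp: chi_def intro: cmor_constk)

lemma chi_ev: "i < length ns \<Longrightarrow> length v = ns ! i \<Longrightarrow> chi ns ms F i v =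
   (if bb ns ms F i = Fj ns F i then Fp ns F i v else omega_v (ms ! bb ns ms F i))"
  by (simp add: chi_def constk_app)

lemma G1: "bb ns ms F 0 = 0 \<and> chi ns ms F 0 (alpha_v (ns ! 0)) = alpha_v (ms ! 0)"
  using J0 ne chi_ev[of 0 "alpha_v (ns ! 0)"] by (simp add: bb_def)

lemma G3: "bb ns ms F (length ns - 1) = length ms - 1 \<and>
   chi ns ms F (length ns - 1) (omega_v (ns ! (length ns - 1))) = omega_v (ms ! (length ms - 1))"
proof -
  have ll: "length ns - 1 < length ns" using ne by simp
  have ml: "0 < ms ! (length ms - 1)" using mposi me by simp
  have "bb ns ms F (length ns - 1) = length ms - 1" using Jlast alpha_ne_omega[OF ml] by (simp add: bb_def)
  then show ?thesis using Jlast chi_ev[OF ll, of "omega_v (ns ! (length ns - 1))"] by simp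
qed

lemma G2: assumes i: "Suc i < length ns"
  shows "(bb ns ms F (Suc i) = bb ns ms F i \<and> chi ns ms F i (omega_v (ns ! i)) = chi ns ms F (Suc i) (alpha_v (ns ! Suc i))) \<or>
    (bb ns ms F (Suc i) = Suc (bb ns ms F i) \<and> chi ns ms F i (omega_v (ns ! i)) = omega_v (ms ! bb ns ms F i) \<and>
     chi ns ms F (Suc i) (alpha_v (ns ! Suc i)) = alpha_v (ms ! bb ns ms F (Suc i)))"
proof -
  have i0: "i < length ns" using i by simp
  define j where "j = Fj ns F i"
  define j' where "j' = Fj ns F (Suc i)"
  define a where "a = Fp ns F i (alpha_v (ns ! i))"
  define z where "z = Fp ns F i (omega_v (ns ! i))"
  define a' where "a' = Fp ns F (Suc i) (alpha_v (ns ! Suc i))"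
  define z' where "z' = Fp ns F (Suc i) (omega_v (ns ! Suc i))"
  have le: "le_bl a z" "le_bl a' z'" using az[OF i0] az[OF i] by (simp_all add: a_def z_def a'_def z'_def)
  have jl: "j < length ms" "j' < length ms" using Ft[OF i0] Ft[OF i] by (simp_all add: j_def j'_def)
  have ev: "chi ns ms F i (omega_v (ns ! i)) = (if bb ns ms F i = j then z else omega_v (ms ! bb ns ms F i))"
    "chi ns ms F (Suc i) (alpha_v (ns ! Suc i)) = (if bb ns ms F (Suc i) = j' then a' else omega_v (ms ! bb ns ms F (Suc i)))"
    using chi_ev[OF i0, of "omega_v (ns ! i)"] chi_ev[OF i, of "alpha_v (ns ! Suc i)"]
    by (simp_all add: j_def j'_def z_def a'_def)
  have bbi: "bb ns ms F i = (if 0 < j \<and> z = alpha_v (ms ! j) then j - 1 else j)"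
    "bb ns ms F (Suc i) = (if 0 < j' \<and> z' = alpha_v (ms ! j') then j' - 1 else j')"
    by (simp_all add: bb_def j_def j'_def z_def z'_def)
  have g: "nec_norm ms 0 (j, constk 0 z) = nec_norm ms 0 (j', constk 0 a')"
    using glue[OF i] by (simp add: j_def j'_def z_def a'_def)
  from norm_vert_eq[OF g] show ?thesis
  proof (elim disjE conjE)
    assume 1: "j = j'" "z = a'"
    show ?thesis
    proof (cases "0 < j \<and> z' = alpha_v (ms ! j)")
      case True
      then have "a' = alpha_v (ms ! j)" using le(2) le_alpha_eq by simp
      then show ?thesis using True 1 ev bbi by auto
    next
      case False
      then show ?thesis using 1 ev bbi by auto
    qed
  next
    assume 2: "j' = Suc j" "Suc j < length ms" "z = omega_v (ms ! j)" "a' = alpha_v (ms ! j')"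
    have "z \<noteq> alpha_v (ms ! j)" using 2 alpha_ne_omega[OF mposi[OF jl(1)]] by simp
    then show ?thesis using 2 ev bbi by auto
  next
    assume 3: "j = Suc j'" "Suc j' < length ms" "a' = omega_v (ms ! j')" "z = alpha_v (ms ! j)"
    have "z' = omega_v (ms ! j')" using le(2) 3 le_omega_eq by simp
    then have "Fp ns F (Suc i) = constk (ns ! Suc i) (omega_v (ms ! j'))"
      using cmor_const_eq[of "ns ! Suc i" "ms ! j'" "Fp ns F (Suc i)"] Ft[OF i] 3
      by (simp add: j'_def a'_def z'_def)
    then show ?thesis using Ft[OF i] 3 by (simp add: j'_def)
  qed
qed

lemma chi_agree: assumes x: "(i, phi) \<in> nec_cells ns k"
  shows "F k (i, phi) = nec_norm ms k (bb ns ms F i, compose (verts k) (chi ns ms F i) phi)"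
proof -
  have i: "i < length ns" "cmor k (ns ! i) phi" using x by (auto simp: nec_cells_iff)
  have e: "F k (i, phi) = nec_norm ms k (Fj ns F i, compose (verts k) (Fp ns F i) phi)"
    using F_nat[OF F x posi[OF i(1)]] .
  show ?thesis
  proof (cases "bb ns ms F i = Fj ns F i")
    case True then show ?thesis using e by (simp add: chi_def)
  next
    case False
    define j where "j = Fj ns F i"
    have c: "0 < j" "Fp ns F i (omega_v (ns ! i)) = alpha_v (ms ! j)" "bb ns ms F i = j - 1"
      using False by (auto simp: bb_def j_def split: if_splits)
    have "Fp ns F i (alpha_v (ns ! i)) = alpha_v (ms ! j)" using az[OF i(1)] c le_alpha_eq by (simp add: j_def)
    then have P: "Fp ns F i = constk (ns ! i) (alpha_v (ms ! j))"
      using cmor_const_eq[of "ns ! i" "ms ! j" "Fp ns F i"] Ft[OF i(1)] c by (simp add: j_def)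
    have jl: "j < length ms" using Ft[OF i(1)] by (simp add: j_def)
    have ao: "alpha_v (ms ! j) \<noteq> omega_v (ms ! j)" using alpha_ne_omega[OF mposi[OF jl]] .
    have "F k (i, phi) = (j, constk k (alpha_v (ms ! j)))"
      using e P compose_const_left[OF i(2)] ao by (simp add: nec_norm_simp j_def)
    moreover have "chi ns ms F i = constk (ns ! i) (omega_v (ms ! (j - 1)))" using False c by (simp add: chi_def)
    ultimately show ?thesis using compose_const_left[OF i(2)] c jl by (simp add: nec_norm_simp)
  qed
qed

lemma part2_exists: "\<exists>As fs. wedge_decomp ns ms F As fs"
proof -
  define b where "b = bb ns ms F"
  define k where "k = length ns"
  define l where "l = length ms"
  have k0: "0 < k" using ne by (simp add: k_def)
  have l0: "0 < l" using me by (simp add: l_def)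
  have b0: "b 0 = 0" using G1 by (simp add: b_def)
  have bs: "\<forall>i. Suc i < length ns \<longrightarrow> b (Suc i) = b i \<or> b (Suc i) = Suc (b i)" using G2 by (auto simp: b_def)
  obtain As where As: "is_decomp (take k ns) (Suc (b (k - 1))) As" "\<forall>i<k. blk_of As i = b i"
    using decomp_exists[OF b0 bs k0] by (auto simp: k_def)
  have bl: "b (k - 1) = l - 1" using G3 by (simp add: b_def k_def l_def)
  have dec: "is_decomp ns l As" using As(1) bl l0 by (simp add: k_def)
  have cA: "concat As = ns" "length As = l" "\<forall>A\<in>set As. A \<noteq> []" using dec by (auto simp: is_decomp_def)
  have sucoff: "blk_off As (Suc j) = blk_off As j + length (As ! j)" if "j < l" for j
    using blk_off_Suc[of j As] that cA by simp
  have Lpos: "0 < length (As ! j)" if "j < l" for j using cA that by (metis length_greater_0_conv nth_mem)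
  have offk: "blk_off As (Suc j) \<le> k" for j using blk_off_le[of As "Suc j"] cA by (simp add: k_def)
  have blk: "blk_off As j + i' < k \<and> As ! j ! i' = ns ! (blk_off As j + i') \<and> b (blk_off As j + i') = j"
    if "j < l" "i' < length (As ! j)" for j i'
  proof -
    have 1: "blk_off As j + i' < k" using sucoff[OF that(1)] offk[of j] that by simp
    have "blk_of As (blk_off As j + i') = j" using sucoff[OF that(1)] that by (intro blk_of_eq) auto
    then show ?thesis using 1 As(2) nth_concat_off[of j As i'] that cA by auto
  qed
  have bprops: "b i < l \<and> blk_off As (b i) \<le> i \<and> i < blk_off As (Suc (b i))" if "i < k" for i
    using blk_of_props[of i As] As(2) that cA by (simp add: k_def)
  define fs where "fs = map (\<lambda>j. star_maps (map (\<lambda>i'. chi ns ms F (blk_off As j + i')) [0..<length (As ! j)])) [0..<l]"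
  have mor: "nec_mor (As ! j) [ms ! j] (fs ! j)" if j: "j < l" for j
  proof -
    define ofs where "ofs = blk_off As j"
    define L where "L = length (As ! j)"
    define phis where "phis = map (\<lambda>i'. chi ns ms F (ofs + i')) [0..<L]"
    have fsj: "fs ! j = star_maps phis" using j by (simp add: fs_def phis_def ofs_def L_def)
    have L0: "0 < L" using Lpos[OF j] by (simp add: L_def)
    have bk: "ofs + i' < k" "As ! j ! i' = ns ! (ofs + i')" "b (ofs + i') = j" if "i' < L" for i'
      using blk[OF j, of i'] that by (simp_all add: ofs_def L_def)
    have oL: "ofs + L \<le> k" using offk[of j] sucoff[OF j] by (simp add: ofs_def L_def)
    have cm: "\<forall>i' < length (As ! j). cmor (As ! j ! i') (ms ! j) (phis ! i')"
    proof (intro allI impI)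
      fix i' assume i': "i' < length (As ! j)"
      then show "cmor (As ! j ! i') (ms ! j) (phis ! i')"
        using bk[of i'] chi_cmor[of "ofs + i'"] by (simp add: phis_def L_def k_def b_def)
    qed
    have ch0: "(phis ! 0) (alpha_v (As ! j ! 0)) = alpha_v (ms ! j)"
    proof (cases "ofs = 0")
      case True
      then have "j = 0" using bk(3)[OF L0] b0 by simp
      then show ?thesis using G1 True L0 bk(2)[OF L0] by (simp add: phis_def)
    next
      case False
      have o1: "ofs - 1 < k" "Suc (ofs - 1) = ofs" using False oL L0 by auto
      have "b (ofs - 1) \<noteq> j"
      proof
        assume "b (ofs - 1) = j"
        then have "blk_off As j \<le> ofs - 1" using bprops[OF o1(1)] by (simp add: ofs_def)
        then show False using False by (simp add: ofs_def)
      qed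
      then have "chi ns ms F ofs (alpha_v (ns ! ofs)) = alpha_v (ms ! b ofs)"
        using G2[of "ofs - 1"] o1 bk(3)[OF L0] bk(1)[OF L0] by (auto simp: b_def k_def)
      then show ?thesis using bk(2,3)[OF L0] L0 by (simp add: phis_def)
    qed
    have chs: "\<forall>i'. Suc i' < length (As ! j) \<longrightarrow> (phis ! i') (omega_v (As ! j ! i')) = (phis ! Suc i') (alpha_v (As ! j ! Suc i'))"
    proof (intro allI impI)
      fix i' assume i': "Suc i' < length (As ! j)"
      then have "Suc (ofs + i') < k" "b (Suc (ofs + i')) = b (ofs + i')" using bk[of "Suc i'"] bk[of i'] by (auto simp: L_def)
      then show "(phis ! i') (omega_v (As ! j ! i')) = (phis ! Suc i') (alpha_v (As ! j ! Suc i'))"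
        using G2[of "ofs + i'"] bk[of i'] bk[of "Suc i'"] i' by (auto simp: phis_def L_def b_def k_def)
    qed
    have chl: "(phis ! (length (As ! j) - 1)) (omega_v (As ! j ! (length (As ! j) - 1))) = omega_v (ms ! j)"
    proof -
      define i where "i = ofs + (L - 1)"
      have iL: "L - 1 < L" using L0 by simp
      have ei: "(phis ! (L - 1)) (omega_v (As ! j ! (L - 1))) = chi ns ms F i (omega_v (ns ! i))"
        using bk(2)[OF iL] iL by (simp add: phis_def i_def)
      have bi: "b i = j" using bk(3)[OF iL] by (simp add: i_def)
      have "chi ns ms F i (omega_v (ns ! i)) = omega_v (ms ! j)"
      proof (cases "Suc i < k")
        case True
        have "b (Suc i) \<noteq> j"
        proof
          assume "b (Suc i) = j"
          then show False using bprops[OF True] sucoff[OF j] L0 by (simp add: i_def ofs_def L_def)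
        qed
        then show ?thesis using G2[of i] True bi by (auto simp: b_def k_def)
      next
        case False
        then have "i = k - 1" using bk(1)[OF iL] by (simp add: i_def)
        then show ?thesis using G3 bi by (simp add: b_def k_def l_def)
      qed
      then show ?thesis using ei by (simp add: L_def)
    qed
    have "nec_mor (As ! j) [ms ! j] (star_maps phis)"
      by (rule star_nec_mor) (use cm ch0 chs chl L0 in \<open>simp_all add: phis_def L_def\<close>)
    then show ?thesis using fsj by simp
  qed
  have agree: "nec_agree ns F (wedge_maps As ms fs)"
    unfolding nec_agree_def
  proof (intro allI ballI)
    fix k' x assume x: "x \<in> nec_cells ns k'"
    obtain i phi where xi: "x = (i, phi)" by (cases x)
    have i: "i < k" using x xi by (simp add: nec_cells_iff k_def)
    have bi: "blk_of As i = b i" using As(2) i by simp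
    have p: "b i < l" "blk_off As (b i) \<le> i" "i < blk_off As (Suc (b i))" using bprops[OF i] by auto
    have lt: "i - blk_off As (b i) < length (As ! (b i))" using p sucoff[OF p(1)] by simp
    have "wedge_maps As ms fs k' (i, phi) = nec_norm ms k' (b i, compose (verts k') (chi ns ms F i) phi)"
      using p lt by (simp add: wedge_maps_def bi fs_def bead_def star_maps_def)
    then show "F k' x = wedge_maps As ms fs k' x" using chi_agree[OF x[unfolded xi]] xi by (simp add: b_def)
  qed
  have "wedge_decomp ns ms F As fs"
    unfolding wedge_decomp_def using dec mor agree by (simp add: fs_def l_def)
  then show ?thesis by blast
qed

lemma const_cell:
  assumes i: "i < length ns" and e: "F (ns ! i) (i, idn (ns ! i)) = (j', constk (ns ! i) w)"
  shows "bead_restr_const ns ms F i"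
proof -
  define n where "n = ns ! i"
  have c: "(j', constk n w) \<in> nec_cells ms n" using nec_mor_cell[OF F idn_cell[OF i posi[OF i]]] e by (simp add: n_def)
  then have c2: "j' < length ms" "cmor n (ms ! j') (constk n w)" "\<not> (Suc j' < length ms \<and> w = omega_v (ms ! j'))"
    by (auto simp: nec_cells_iff)
  have lw: "length w = ms ! j'" using cmor_len[OF c2(2), of "alpha_v n"] by (simp add: constk_app)
  have v: "(j', constk 0 w) \<in> nec_cells ms 0" using c2 cmor_const0[OF lw] by (simp add: nec_cells_iff)
  show ?thesis unfolding bead_restr_const_def
  proof (intro bexI[OF _ v] allI impI)
    fix k psi assume psi: "cmor k (ns ! i) psi"
    have "F k (nec_norm ns k (fst (i, idn n), compose (verts k) (snd (i, idn n)) psi)) =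
       nec_norm ms k (fst (F n (i, idn n)), compose (verts k) (snd (F n (i, idn n))) psi)"
      using nec_mor_nat[OF F psi idn_cell[OF i posi[OF i]]] by (simp add: n_def)
    then have "F k (nec_norm ns k (i, psi)) = nec_norm ms k (j', constk k w)"
      using e compose_idn_left[OF psi] compose_const_left[OF psi] by (simp add: n_def)
    then show "F k (bead ns i k psi) = act (necklace ms) k 0 (to_point k) (j', constk 0 w)"
      by (simp add: bead_def act_nec to_point_const)
  qed
qed

lemma Wlem:
  assumes W: "wedge_decomp ns ms F As fs" and i: "i < length ns"
  shows "blk_of As i < length ms \<and> i - blk_off As (blk_of As i) < length (As ! blk_of As i) \<and>
     As ! blk_of As i ! (i - blk_off As (blk_of As i)) = ns ! i \<and>
     F (ns ! i) (i, idn (ns ! i)) = nec_norm ms (ns ! i) (blk_of As i, Fp (As ! blk_of As i) (fs ! blk_of As i) (i - blk_off As (blk_of As i)))"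
proof -
  define j where "j = blk_of As i"
  define i' where "i' = i - blk_off As j"
  have d: "concat As = ns" "length As = length ms" "length fs = length ms" "\<forall>j < length ms. nec_mor (As ! j) [ms ! j] (fs ! j)"
    "nec_agree ns F (wedge_maps As ms fs)"
    using W by (auto simp: wedge_decomp_def is_decomp_def)
  have p: "j < length ms" "blk_off As j \<le> i" "i < blk_off As (Suc j)" using blk_of_props[of i As] i d by (auto simp: j_def)
  have i': "i' < length (As ! j)" using p blk_off_Suc[of j As] d by (simp add: i'_def)
  have nn: "As ! j ! i' = ns ! i" using nth_concat_off[of j As i'] p d i' by (simp add: i'_def)
  have ag: "F (ns ! i) (i, idn (ns ! i)) = wedge_maps As ms fs (ns ! i) (i, idn (ns ! i))"
    using d(5) idn_cell[OF i posi[OF i]] by (simp add: nec_agree_def)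
  have t: "(fs ! j) (As ! j ! i') (i', idn (As ! j ! i')) = (Fj (As ! j) (fs ! j) i', Fp (As ! j) (fs ! j) i')"
    using F_top(1)[OF d(4)[rule_format, OF p(1)] i'] nn posi[OF i] by simp
  have "F (ns ! i) (i, idn (ns ! i)) = nec_norm ms (ns ! i) (j, Fp (As ! j) (fs ! j) i')"
    using ag t nn by (simp add: wedge_maps_def j_def[symmetric] i'_def[symmetric] bead_def)
  then show ?thesis using p i' nn by (simp add: j_def i'_def)
qed

lemma norm_inj: "nec_norm ms n (j, p) = nec_norm ms n (j, p') \<Longrightarrow> p = p'"
  by (auto simp: nec_norm_simp split: if_splits)

lemma Fj_blk:
  assumes nc: "\<forall>i < length ns. \<not> bead_restr_const ns ms F i" and W: "wedge_decomp ns ms F As fs" and i: "i < length ns"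
  shows "Fj ns F i = blk_of As i"
proof -
  define j where "j = blk_of As i"
  define p where "p = Fp (As ! j) (fs ! j) (i - blk_off As j)"
  have e: "F (ns ! i) (i, idn (ns ! i)) = nec_norm ms (ns ! i) (j, p)" using Wlem[OF W i] by (simp add: j_def p_def)
  show ?thesis
  proof (cases "Suc j < length ms \<and> p = constk (ns ! i) (omega_v (ms ! j))")
    case True
    then have "F (ns ! i) (i, idn (ns ! i)) = (Suc j, constk (ns ! i) (alpha_v (ms ! Suc j)))"
      using e by (simp add: nec_norm_simp)
    then have "bead_restr_const ns ms F i" using const_cell[OF i] by blast
    then show ?thesis using nc i by blast
  next
    case False
    then show ?thesis using e by (simp add: nec_norm_simp Fj_def j_def)
  qed
qed

lemma part2_unique:
  assumes nc: "\<forall>i < length ns. \<not> bead_restr_const ns ms F i"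
    and W: "wedge_decomp ns ms F As fs" and W': "wedge_decomp ns ms F As' fs'"
  shows "As = As' \<and> (\<forall>j < length ms. nec_agree (As ! j) (fs ! j) (fs' ! j))"
proof -
  have dd: "is_decomp ns (length ms) As" "is_decomp ns (length ms) As'" using W W' by (auto simp: wedge_decomp_def)
  have AA: "As = As'"
    using blk_eq[OF dd] Fj_blk[OF nc W] Fj_blk[OF nc W'] by simp
  have d: "concat As = ns" "length As = length ms" "\<forall>j < length ms. nec_mor (As ! j) [ms ! j] (fs ! j)"
    "\<forall>j < length ms. nec_mor (As ! j) [ms ! j] (fs' ! j)"
    using W W' AA by (auto simp: wedge_decomp_def is_decomp_def)
  have "nec_agree (As ! j) (fs ! j) (fs' ! j)" if j: "j < length ms" for j
    unfolding nec_agree_def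
  proof (intro allI ballI)
    fix k y assume y: "y \<in> nec_cells (As ! j) k"
    obtain i' phi where yi: "y = (i', phi)" by (cases y)
    have i': "i' < length (As ! j)" using y yi by (simp add: nec_cells_iff)
    define i where "i = blk_off As j + i'"
    have il: "i < length ns" using blk_off_Suc[of j As] blk_off_le[of As "Suc j"] d j i' by (simp add: i_def)
    have nn: "As ! j ! i' = ns ! i" using nth_concat_off[of j As i'] d j i' by (simp add: i_def)
    have bo: "blk_of As i = j" using blk_off_Suc[of j As] d j i' by (intro blk_of_eq) (auto simp: i_def)
    have ii: "i - blk_off As j = i'" by (simp add: i_def)
    have "nec_norm ms (ns ! i) (j, Fp (As ! j) (fs ! j) i') = nec_norm ms (ns ! i) (j, Fp (As ! j) (fs' ! j) i')"
      using Wlem[OF W il] Wlem[OF W' il] AA bo ii by simp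
    then have pe: "Fp (As ! j) (fs ! j) i' = Fp (As ! j) (fs' ! j) i'" by (rule norm_inj)
    have ps: "0 < As ! j ! i'" using nn posi[OF il] by simp
    have j1: "Fj (As ! j) (fs ! j) i' = 0" "Fj (As ! j) (fs' ! j) i' = 0"
      using F_top(2)[OF d(3)[rule_format, OF j] i' ps] F_top(2)[OF d(4)[rule_format, OF j] i' ps] by simp_all
    show "(fs ! j) k y = (fs' ! j) k y"
      using F_nat[OF d(3)[rule_format, OF j] y[unfolded yi] ps] F_nat[OF d(4)[rule_format, OF j] y[unfolded yi] ps] pe j1 yi
      by simp
  qed
  then show ?thesis using AA by blast
qed

end

theorem proposition2p2:
  shows "(\<forall>ns m F. ns \<noteq> [] \<and> (\<forall>n \<in> set ns. 0 < n) \<and> 0 < m \<and> nec_mor ns [m] F \<longrightarrow>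
            (\<exists>!phis. length phis = length ns \<and>
                (\<forall>i < length ns. cmor (ns ! i) m (phis ! i)) \<and>
                (phis ! 0) (alpha_v (ns ! 0)) = alpha_v m \<and>
                (\<forall>i. Suc i < length ns \<longrightarrow>
                    (phis ! i) (omega_v (ns ! i)) = (phis ! Suc i) (alpha_v (ns ! Suc i))) \<and>
                (phis ! (length ns - 1)) (omega_v (last ns)) = omega_v m \<and>
                nec_agree ns F (star_maps phis)) \<and>
            m \<le> sum_list ns)
       \<and> (\<forall>ns ms F. ns \<noteq> [] \<and> ms \<noteq> [] \<and> (\<forall>n \<in> set ns. 0 < n) \<and> (\<forall>m \<in> set ms. 0 < m) \<and>
              nec_mor ns ms F \<longrightarrow>
            (\<exists>As fs. wedge_decomp ns ms F As fs) \<and>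
            ((\<forall>i < length ns. \<not> bead_restr_const ns ms F i) \<longrightarrow>
               (\<forall>As fs As' fs'. wedge_decomp ns ms F As fs \<and> wedge_decomp ns ms F As' fs' \<longrightarrow>
                   As = As' \<and> (\<forall>j < length ms. nec_agree (As ! j) (fs ! j) (fs' ! j)))))"
proof (intro conjI allI impI)
  fix ns m F
  assume a: "ns \<noteq> [] \<and> (\<forall>n \<in> set ns. 0 < n) \<and> 0 < m \<and> nec_mor ns [m] F"
  from a have a1: "ns \<noteq> []" "\<forall>n \<in> set ns. 0 < n" "0 < m" "nec_mor ns [m] F" by auto
  note p = part1[OF a1]
  from p show "\<exists>!phis. length phis = length ns \<and>
                (\<forall>i < length ns. cmor (ns ! i) m (phis ! i)) \<and>
                (phis ! 0) (alpha_v (ns ! 0)) = alpha_v m \<and>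
                (\<forall>i. Suc i < length ns \<longrightarrow>
                    (phis ! i) (omega_v (ns ! i)) = (phis ! Suc i) (alpha_v (ns ! Suc i))) \<and>
                (phis ! (length ns - 1)) (omega_v (last ns)) = omega_v m \<and>
                nec_agree ns F (star_maps phis)" by (rule conjunct1)
  from p show "m \<le> sum_list ns" by (rule conjunct2)
next
  fix ns ms F
  assume a: "ns \<noteq> [] \<and> ms \<noteq> [] \<and> (\<forall>n \<in> set ns. 0 < n) \<and> (\<forall>m \<in> set ms. 0 < m) \<and> nec_mor ns ms F"
  from a have a1: "ns \<noteq> []" "ms \<noteq> []" "\<forall>n \<in> set ns. 0 < n" "\<forall>m \<in> set ms. 0 < m" "nec_mor ns ms F" by auto
  show "\<exists>As fs. wedge_decomp ns ms F As fs" by (rule part2_exists[OF a1])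
  fix As fs As' fs'
  assume nc: "\<forall>i < length ns. \<not> bead_restr_const ns ms F i"
    and w: "wedge_decomp ns ms F As fs \<and> wedge_decomp ns ms F As' fs'"
  from w have w1: "wedge_decomp ns ms F As fs" "wedge_decomp ns ms F As' fs'" by auto
  note q = part2_unique[OF a1 nc w1]
  from q show "As = As'" by (rule conjunct1)
  fix j assume "j < length ms"
  with q show "nec_agree (As ! j) (fs ! j) (fs' ! j)" by blast
qed

end
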